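(* There is an absolute constant $C_1>0$ such that the following holds. Let $f:\mathbb{N}\to\mathbb{N}$ be an increasing function. For each $n\in\mathbb{N}$, place $f(n)$ points independently and uniformly at random in the interior of a disc $\mathcal{D}$ in $\mathbb{R}^2$ of radius $n$, and let $G=G_n$ be the geometric graph whose vertices are these points, with an edge between two points whenever their Euclidean distance is at most one. Set $\lambda_n:=\frac{f(n)}{\pi n^2}$. If $\lambda_n>C_1\log n$, then asymptotically almost surely (i.e. with probability tending to $1$ as $n\to\infty$): (i) the degree of every vertex of $G$ lies between $\frac{\pi}{3}\lambda_n$ and $2\pi\lambda_n$; (ii) the graph diameter of $G$ is at most $6n$. *)

theory Defs
  imports "HOL-Probability.Probability"
begin

definition point_process :: "nat \<Rightarrow> real \<Rightarrow> (nat \<Rightarrow> real^2) measure" where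
  "point_process m r = PiM {..<m} (\<lambda>_. uniform_measure lborel (ball (0::real^2) r))"

definition geo_degree :: "(nat \<Rightarrow> real^2) \<Rightarrow> nat \<Rightarrow> nat \<Rightarrow> nat" where
  "geo_degree x m i = card {j. j < m \<and> j \<noteq> i \<and> dist (x i) (x j) \<le> 1}"

definition geo_walk_le :: "(nat \<Rightarrow> real^2) \<Rightarrow> nat \<Rightarrow> nat \<Rightarrow> nat \<Rightarrow> nat \<Rightarrow> bool" where
  "geo_walk_le x m k i j \<longleftrightarrow>
     (\<exists>p l. l \<le> k \<and> p 0 = i \<and> p l = j \<and> (\<forall>t\<le>l. p t < m) \<and>
            (\<forall>t<l. dist (x (p t)) (x (p (Suc t))) \<le> 1))"

definition geo_diam_le :: "(nat \<Rightarrow> real^2) \<Rightarrow> nat \<Rightarrow> nat \<Rightarrow> bool" where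
  "geo_diam_le x m k \<longleftrightarrow> (\<forall>i<m. \<forall>j<m. geo_walk_le x m k i j)"

end

theory Submission
  imports Defs
begin

definition cnt :: "nat \<Rightarrow> 'a set \<Rightarrow> (nat \<Rightarrow> 'a) \<Rightarrow> real" where
  "cnt m A x = (\<Sum>j<m. indicator A (x j))"

lemma mgf:
  assumes M: "prob_space M" and A: "A \<in> sets M"
  shows "(\<integral>x. exp (s * cnt m A x) \<partial>PiM {..<m} (\<lambda>_. M)) = (1 + measure M A * (exp s - 1)) ^ m"
proof -
  interpret Mp: prob_space M by fact
  have i1: "integrable M (\<lambda>z. exp (s * indicator A z))"
  proof (rule Mp.integrable_const_bound[where B="exp \<bar>s\<bar>"])
    show "(\<lambda>z. exp (s * indicator A z)) \<in> borel_measurable M" using A by measurable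
    show "AE x in M. norm (exp (s * indicator A x)) \<le> exp \<bar>s\<bar>"
      by (rule AE_I2) (auto simp: indicator_def)
  qed
  have i2: "(\<integral>z. exp (s * indicator A z) \<partial>M) = 1 + measure M A * (exp s - 1)"
  proof -
    have "(\<lambda>z. exp (s * indicator A z)) = (\<lambda>z. 1 + (exp s - 1) * indicator A z)"
      by (auto simp: indicator_def)
    then have "(\<integral>z. exp (s * indicator A z) \<partial>M) = (\<integral>z. 1 + (exp s - 1) * indicator A z \<partial>M)"
      by simp
    also have "\<dots> = (\<integral>z. 1 \<partial>M) + (\<integral>z. (exp s - 1) * indicator A z \<partial>M)"
      by (rule Bochner_Integration.integral_add) (use A in \<open>auto intro!: integrable_real_indicator simp: less_top[symmetric] Mp.emeasure_finite\<close>)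
    also have "\<dots> = 1 + measure M A * (exp s - 1)"
      using A by (simp add: Mp.prob_space)
    finally show ?thesis .
  qed
  interpret product_prob_space "\<lambda>_. M" "{..<m}"
    using M by (simp add: product_prob_space_def product_prob_space_axioms_def product_sigma_finite_def prob_space_imp_sigma_finite)
  have e: "exp (s * cnt m A x) = (\<Prod>j\<in>{..<m}. exp (s * indicator A (x j)))" for x
    unfolding cnt_def sum_distrib_left by (rule exp_sum) simp
  show ?thesis
    unfolding e by (subst product_integral_prod) (use i1 i2 in auto)
qed

lemma cnt_meas[measurable]:
  assumes "A \<in> sets M"
  shows "cnt m A \<in> borel_measurable (PiM {..<m} (\<lambda>_. M))"
  unfolding cnt_def using assms by measurable

lemma cnt_nonneg: "0 \<le> cnt m A x"
  unfolding cnt_def by (intro sum_nonneg) auto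

lemma cnt_le: "cnt m A x \<le> m"
proof -
  have "cnt m A x \<le> (\<Sum>j<m. 1)" unfolding cnt_def by (intro sum_mono) (auto simp: indicator_def)
  then show ?thesis by simp
qed

lemma exp_pow_div: "exp X ^ m / exp Y = exp (real m * X - Y)"
  by (simp add: exp_diff exp_of_nat_mult)

lemma tail_upper:
  assumes M: "prob_space M" and A: "A \<in> sets M" and s: "s > 0"
  shows "measure (PiM {..<m} (\<lambda>_. M)) {x\<in>space (PiM {..<m} (\<lambda>_. M)). b \<le> cnt m A x}
          \<le> exp (- s * b + m * measure M A * (exp s - 1))"
proof -
  let ?P = "PiM {..<m} (\<lambda>_. M)"
  interpret P: prob_space ?P by (rule prob_space_PiM) (use M in auto)
  interpret Mp: prob_space M by fact
  have int: "integrable ?P (\<lambda>x. exp (s * cnt m A x))"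
  proof (rule P.integrable_const_bound[where B="exp (\<bar>s\<bar> * m)"])
    have [measurable]: "cnt m A \<in> borel_measurable ?P" using A by (rule cnt_meas)
    show "(\<lambda>x. exp (s * cnt m A x)) \<in> borel_measurable ?P" by measurable
    show "AE x in ?P. norm (exp (s * cnt m A x)) \<le> exp (\<bar>s\<bar> * m)"
    proof (rule AE_I2)
      fix x
      have "s * cnt m A x \<le> \<bar>s\<bar> * m"
        using cnt_le[of m A x] cnt_nonneg[of m A x]
        by (metis abs_ge_self abs_mult abs_of_nonneg mult_mono abs_ge_zero order_trans)
      then show "norm (exp (s * cnt m A x)) \<le> exp (\<bar>s\<bar> * m)" by simp
    qed
  qed
  have eq: "{x\<in>space ?P. b \<le> cnt m A x} = {x\<in>space ?P. exp (s*b) \<le> exp (s * cnt m A x)}"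
    using s by auto
  have "measure ?P {x\<in>space ?P. exp (s*b) \<le> exp (s * cnt m A x)} \<le> (\<integral>x. exp (s * cnt m A x) \<partial>?P) / exp (s*b)"
    by (rule integral_Markov_inequality_measure[OF int]) (use A in auto)
  also have "\<dots> = (1 + measure M A * (exp s - 1)) ^ m / exp (s*b)"
    by (simp add: mgf[OF M A])
  also have "\<dots> \<le> exp (measure M A * (exp s - 1)) ^ m / exp (s*b)"
    by (intro divide_right_mono power_mono) (use s in \<open>auto intro!: mult_nonneg_nonneg\<close>)
  also have "\<dots> = exp (m * (measure M A * (exp s - 1)) - s * b)"
    by (simp add: exp_diff exp_of_nat_mult)
  also have "\<dots> = exp (- s * b + m * measure M A * (exp s - 1))"
    by (simp add: algebra_simps)
  finally show ?thesis using eq by simp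
qed

lemma tail_lower:
  assumes M: "prob_space M" and A: "A \<in> sets M" and s: "s > 0"
  shows "measure (PiM {..<m} (\<lambda>_. M)) {x\<in>space (PiM {..<m} (\<lambda>_. M)). cnt m A x \<le> a}
          \<le> exp (s * a - m * measure M A * (1 - exp (- s)))"
proof -
  let ?P = "PiM {..<m} (\<lambda>_. M)"
  interpret P: prob_space ?P by (rule prob_space_PiM) (use M in auto)
  interpret Mp: prob_space M by fact
  have int: "integrable ?P (\<lambda>x. exp ((-s) * cnt m A x))"
  proof (rule P.integrable_const_bound[where B="1"])
    have [measurable]: "cnt m A \<in> borel_measurable ?P" using A by (rule cnt_meas)
    show "(\<lambda>x. exp ((-s) * cnt m A x)) \<in> borel_measurable ?P" by measurable
    show "AE x in ?P. norm (exp ((-s) * cnt m A x)) \<le> 1"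
      by (rule AE_I2) (use s cnt_nonneg[of m A] in auto)
  qed
  have eq: "{x\<in>space ?P. cnt m A x \<le> a} = {x\<in>space ?P. exp (-s*a) \<le> exp ((-s) * cnt m A x)}"
    using s by auto
  have p1: "measure M A \<le> 1" by simp
  have "measure ?P {x\<in>space ?P. exp (-s*a) \<le> exp ((-s) * cnt m A x)} \<le> (\<integral>x. exp ((-s) * cnt m A x) \<partial>?P) / exp (-s*a)"
    by (rule integral_Markov_inequality_measure[OF int]) (use A in auto)
  also have "\<dots> = (1 + measure M A * (exp (-s) - 1)) ^ m / exp (-s*a)"
    using mgf[OF M A, of m "-s"] by simp
  also have "\<dots> \<le> exp (measure M A * (exp (-s) - 1)) ^ m / exp (-s*a)"
  proof (intro divide_right_mono power_mono)
    have "measure M A * (1 - exp (-s)) \<le> 1 * 1"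
      using s by (intro mult_mono p1) auto
    then show "0 \<le> 1 + measure M A * (exp (- s) - 1)" by (simp add: algebra_simps)
  qed (use s in auto)
  also have "\<dots> = exp (m * (measure M A * (exp (-s) - 1)) - (-s) * a)"
    by (rule exp_pow_div)
  also have "\<dots> = exp (s * a - m * measure M A * (1 - exp (- s)))"
    by (simp add: algebra_simps)
  finally show ?thesis using eq by simp
qed

definition H :: "real \<Rightarrow> real^2 \<Rightarrow> (real^2) set" where
  "H r y = ball y r \<inter> {z. inner z y \<le> inner y y}"

lemma H_borel[measurable]: "H r y \<in> sets borel"
proof -
  have "closed {z::real^2. inner z y \<le> inner y y}"
    by (intro closed_Collect_le continuous_intros)
  then show ?thesis unfolding H_def by (intro sets.Int borel_open borel_closed open_ball)
qed

lemma H_sub_ball: "H r y \<subseteq> ball y r"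
  unfolding H_def by auto

lemma H_sub_D:
  assumes "norm y ^ 2 + r ^ 2 \<le> R ^ 2" "R \<ge> 0"
  shows "H r y \<subseteq> ball 0 R"
proof
  fix z assume z: "z \<in> H r y"
  have d: "norm (z - y) < r" and i: "inner z y \<le> inner y y" using z by (auto simp: H_def dist_norm norm_minus_commute)
  have "norm z ^ 2 = norm y ^ 2 + 2 * inner (z - y) y + norm (z - y) ^ 2"
    by (simp add: power2_norm_eq_inner inner_diff_left inner_diff_right inner_commute algebra_simps)
  also have "\<dots> < norm y ^ 2 + r ^ 2"
  proof -
    have "inner (z - y) y \<le> 0" using i by (simp add: inner_diff_left)
    moreover have "norm (z - y) ^ 2 < r ^ 2" using d by (intro power_strict_mono) auto
    ultimately show ?thesis by linarith
  qed
  finally have "norm z ^ 2 < R ^ 2" using assms by linarith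
  then have "norm z < R" using assms(2) by (meson abs_norm_cancel power2_less_imp_less)
  then show "z \<in> ball 0 R" by simp
qed

lemma H_measure:
  assumes r: "r \<ge> 0"
  shows "measure lborel (H r y) \<ge> pi * r ^ 2 / 2"
proof -
  define S where "S = ball (0::real^2) r \<inter> {v. inner v y \<le> 0}"
  define T where "T = ball (0::real^2) r \<inter> {v. inner v y \<ge> 0}"
  have SB[measurable]: "S \<in> sets lborel" unfolding S_def
    by (simp add: borel_open borel_closed closed_halfspace_le)
  have TB[measurable]: "T \<in> sets lborel" unfolding T_def
    by (simp add: borel_open borel_closed closed_halfspace_ge)
  have T_img: "T = (\<lambda>x. (-1) *\<^sub>R x + 0) ` S"
  proof (rule set_eqI)
    fix v
    show "v \<in> T \<longleftrightarrow> v \<in> (\<lambda>x. (-1) *\<^sub>R x + 0) ` S"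
    proof
      assume "v \<in> T" then show "v \<in> (\<lambda>x. (-1) *\<^sub>R x + 0) ` S"
        by (intro image_eqI[where x="-v"]) (auto simp: S_def T_def)
    qed (auto simp: S_def T_def)
  qed
  have "measure lebesgue T = \<bar>-1\<bar> ^ DIM(real^2) * measure lebesgue S"
    unfolding T_img by (rule measure_lebesgue_affine)
  then have ST: "measure lborel T = measure lborel S"
    using SB TB by simp
  have "ball (0::real^2) r = S \<union> T" by (auto simp: S_def T_def)
  then have "measure lborel (ball (0::real^2) r) \<le> measure lborel S + measure lborel T"
    using measure_Un_le[OF SB TB] by simp
  then have "r ^ 2 * pi \<le> 2 * measure lborel S" using circle_area[OF r, of 0] ST by simp
  moreover have "H r y = (+) y ` S"
  proof (rule set_eqI)
    fix z
    show "z \<in> H r y \<longleftrightarrow> z \<in> (+) y ` S"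
    proof
      assume "z \<in> H r y" then show "z \<in> (+) y ` S"
        by (intro image_eqI[where x="z - y"]) (auto simp: S_def H_def dist_norm inner_diff_left)
    qed (auto simp: S_def H_def dist_norm inner_add_left)
  qed
  then have "measure lebesgue (H r y) = measure lebesgue S"
    by (simp add: measure_translation)
  then have "measure lborel (H r y) = measure lborel S"
    using SB by simp
  ultimately show ?thesis by (simp add: algebra_simps)
qed

definition anchor :: "real \<Rightarrow> real^2 \<Rightarrow> real^2" where
  "anchor n q = (\<chi> i. of_int \<lfloor>1000 * ((n - 1/100)/n) * q$i\<rfloor> / 1000)"

definition grid :: "nat \<Rightarrow> (real^2) set" where
  "grid n = (\<lambda>g. \<chi> i. of_int (g i) / 1000) ` (PiE UNIV (\<lambda>_::2. {-(1000*int n+1)..1000*int n+1}))"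

lemma finite_grid: "finite (grid n)"
  unfolding grid_def by (intro finite_imageI finite_PiE) auto

lemma card_grid: "card (grid n) \<le> (2000*n+3)^2"
proof -
  have "card (grid n) \<le> card (PiE (UNIV::2 set) (\<lambda>_. {-(1000*int n+1)..1000*int n+1}))"
    unfolding grid_def by (intro card_image_le finite_PiE) auto
  also have "\<dots> = (2000*n+3)^2"
    by (simp add: card_PiE)
  finally show ?thesis .
qed

lemma anchor_props:
  fixes q :: "real^2"
  assumes n: "n \<ge> 100" and q: "norm q \<le> real n"
  shows "dist q (anchor (real n) q) \<le> 1/50"
    and "norm (anchor (real n) q) ^ 2 + 1 < real n ^ 2"
    and "anchor (real n) q \<in> grid n"
proof -
  define c where "c = (real n - 1/100) / real n"
  define w where "w = c *\<^sub>R q"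
  define y where "y = anchor (real n) q"
  have npos: "real n \<ge> 100" using n by simp
  have c0: "0 \<le> c" "c \<le> 1" using npos by (auto simp: c_def field_simps)
  have yi: "y $ i = of_int \<lfloor>1000 * w $ i\<rfloor> / 1000" for i
    unfolding y_def anchor_def w_def c_def by (simp only: vec_lambda_beta vector_scaleR_component real_scaleR_def mult.assoc)
  have comp: "\<bar>(w - y) $ i\<bar> \<le> 1/1000" for i
  proof -
    have "of_int \<lfloor>1000 * w $ i\<rfloor> \<le> 1000 * w$i" "1000 * w$i < of_int \<lfloor>1000 * w $ i\<rfloor> + 1"
      by linarith+
    then have "y$i \<le> w$i" "w$i \<le> y$i + 1/1000" unfolding yi by linarith+
    then show ?thesis by (simp add: abs_le_iff)
  qed
  have wy: "norm (w - y) \<le> 2/1000"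
  proof -
    have "norm (w - y) \<le> (\<Sum>i\<in>UNIV. \<bar>(w - y) $ i\<bar>)" by (rule norm_le_l1_cart)
    also have "\<dots> \<le> (\<Sum>i\<in>(UNIV::2 set). 1/1000)" by (intro sum_mono comp)
    also have "\<dots> = 2/1000" by simp
    finally show ?thesis .
  qed
  have qw: "norm (q - w) \<le> 1/100"
  proof -
    have "q - w = (1 - c) *\<^sub>R q" by (simp add: w_def algebra_simps)
    then have "norm (q - w) = (1 - c) * norm q" using c0 by simp
    also have "\<dots> = norm q / (100 * real n)" using npos by (simp add: c_def field_simps)
    also have "\<dots> \<le> 1/100" using q npos by (simp add: field_simps)
    finally show ?thesis .
  qed
  have "dist q y \<le> norm (q - w) + norm (w - y)"
    by (metis dist_norm diff_add_cancel norm_triangle_ineq add_diff_eq)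
  then show "dist q (anchor (real n) q) \<le> 1/50" using qw wy by (simp add: y_def)
  have "norm y \<le> norm w + norm (w - y)" by (metis norm_triangle_sub norm_minus_commute)
  also have "norm w = c * norm q" using c0 by (simp add: w_def)
  also have "c * norm q \<le> c * real n" using c0 q by (intro mult_left_mono) auto
  also have "c * real n = real n - 1/100" using npos by (simp add: c_def)
  finally have ny: "norm y \<le> real n - 8/1000" using wy by linarith
  have ny2: "norm y ^ 2 \<le> (real n - 8/1000) ^ 2" by (intro power_mono ny) auto
  have "(real n - 8/1000) ^ 2 + 1 < real n ^ 2" using npos by (simp add: power2_eq_square algebra_simps)
  then show "norm (anchor (real n) q) ^ 2 + 1 < real n ^ 2" using ny2 by (simp add: y_def)
  have fl: "\<lfloor>1000 * w $ i\<rfloor> \<in> {-(1000*int n+1)..1000*int n+1}" for i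
  proof -
    have "\<bar>w $ i\<bar> \<le> norm w" by (rule component_le_norm_cart)
    also have "norm w \<le> real n" using \<open>norm w = c * norm q\<close> \<open>c * norm q \<le> c * real n\<close> \<open>c * real n = real n - 1/100\<close> by linarith
    finally have "\<bar>1000 * w $ i\<bar> \<le> 1000 * real n" by simp
    then show ?thesis by (simp; linarith)
  qed
  have "y = (\<lambda>g. \<chi> i. of_int (g i) / 1000) (\<lambda>i. \<lfloor>1000 * w $ i\<rfloor>)"
    by (simp add: vec_eq_iff yi)
  moreover have "(\<lambda>i. \<lfloor>1000 * w $ i\<rfloor>) \<in> PiE (UNIV::2 set) (\<lambda>_. {-(1000*int n+1)..1000*int n+1})"
    using fl by auto
  ultimately show "anchor (real n) q \<in> grid n" unfolding grid_def y_def
    by (rule rev_image_eqI[rotated])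
qed

lemma cnt_card: "cnt m A x = real (card {j. j < m \<and> x j \<in> A})"
proof -
  have "{j. j < m \<and> x j \<in> A} = {..<m} \<inter> {j. x j \<in> A}" by auto
  then show ?thesis by (simp add: cnt_def indicator_def sum.If_cases)
qed

lemma walk_point_norm:
  fixes a b :: "real^2"
  assumes "norm a < R" "norm b < R" "0 \<le> th" "th \<le> 1"
  shows "norm (a + th *\<^sub>R (b - a)) < R"
proof -
  have "a + th *\<^sub>R (b - a) = (1 - th) *\<^sub>R a + th *\<^sub>R b" by (simp add: algebra_simps)
  then have "norm (a + th *\<^sub>R (b - a)) \<le> (1 - th) * norm a + th * norm b"
    using assms by (metis abs_of_nonneg diff_ge_0_iff_ge norm_scaleR norm_triangle_ineq order_trans order.refl)
  also have "\<dots> < (1 - th) * R + th * R"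
  proof (cases "th = 0")
    case True then show ?thesis using assms by simp
  next
    case False
    then have "th * norm b < th * R" using assms by simp
    moreover have "(1 - th) * norm a \<le> (1 - th) * R" using assms by (intro mult_left_mono) auto
    ultimately show ?thesis by linarith
  qed
  finally show ?thesis by (simp add: algebra_simps)
qed

lemma deterministic:
  fixes x :: "nat \<Rightarrow> real^2" and n m :: nat and lam :: real
  assumes n: "n \<ge> 100"
  and inD: "\<forall>j<m. x j \<in> ball 0 (real n)"
  and good: "\<forall>y\<in>grid n. norm y ^ 2 + 1 < real n ^ 2 \<longrightarrow>
      pi/3*lam + 1 < cnt m (H (49/50) y) x \<and> cnt m (ball y (103/100)) x < 2*pi*lam \<and> 1/2 < cnt m (H (1/5) y) x"
  shows "(\<forall>i<m. pi/3*lam \<le> real (geo_degree x m i) \<and> real (geo_degree x m i) \<le> 2*pi*lam)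
         \<and> geo_diam_le x m (6*n)"
proof (intro conjI allI impI)
  fix i assume i: "i < m"
  define y where "y = anchor (real n) (x i)"
  have xi: "norm (x i) \<le> real n" using inD i by auto
  note ap = anchor_props[OF n xi, folded y_def]
  have g: "pi/3*lam + 1 < cnt m (H (49/50) y) x" "cnt m (ball y (103/100)) x < 2*pi*lam"
    using good ap by auto
  have fin: "finite {j. j < m \<and> j \<noteq> i \<and> dist (x i) (x j) \<le> 1}" by auto
  have "{j. j < m \<and> x j \<in> H (49/50) y} \<subseteq> insert i {j. j < m \<and> j \<noteq> i \<and> dist (x i) (x j) \<le> 1}"
  proof
    fix j assume j: "j \<in> {j. j < m \<and> x j \<in> H (49/50) y}"
    then have "dist (x j) y < 49/50" using H_sub_ball by (force simp: dist_commute)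
    then have "dist (x i) (x j) \<le> 1" using ap(1) dist_triangle[of "x i" "x j" y] by (simp add: dist_commute)
    then show "j \<in> insert i {j. j < m \<and> j \<noteq> i \<and> dist (x i) (x j) \<le> 1}" using j by auto
  qed
  then have "card {j. j < m \<and> x j \<in> H (49/50) y} \<le> card (insert i {j. j < m \<and> j \<noteq> i \<and> dist (x i) (x j) \<le> 1})"
    by (intro card_mono) auto
  also have "\<dots> \<le> Suc (geo_degree x m i)"
    unfolding geo_degree_def using fin by (simp add: card_insert_if)
  finally show "pi/3*lam \<le> real (geo_degree x m i)" using g(1) by (simp add: cnt_card)
  have "{j. j < m \<and> j \<noteq> i \<and> dist (x i) (x j) \<le> 1} \<subseteq> {j. j < m \<and> x j \<in> ball y (103/100)}"
  proof
    fix j assume j: "j \<in> {j. j < m \<and> j \<noteq> i \<and> dist (x i) (x j) \<le> 1}"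
    then have "dist y (x j) < 103/100" using ap(1) dist_triangle[of y "x j" "x i"] by (simp add: dist_commute)
    then show "j \<in> {j. j < m \<and> x j \<in> ball y (103/100)}" using j by auto
  qed
  then have "geo_degree x m i \<le> card {j. j < m \<and> x j \<in> ball y (103/100)}"
    unfolding geo_degree_def by (intro card_mono) auto
  then show "real (geo_degree x m i) \<le> 2*pi*lam" using g(2) by (simp add: cnt_card)
next
  show "geo_diam_le x m (6*n)"
    unfolding geo_diam_le_def
  proof (intro allI impI)
    fix i j assume i: "i < m" and j: "j < m"
    define L where "L = 4 * n"
    have L0: "L \<noteq> 0" "real L = 4 * real n" using n by (auto simp: L_def)
    define q where "q t = x i + (real t / real L) *\<^sub>R (x j - x i)" for t
    have qn: "norm (q t) < real n" if "t \<le> L" for t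
      unfolding q_def using inD i j that L0 by (intro walk_point_norm) auto
    define v where "v t = (SOME v. v < m \<and> x v \<in> H (1/5) (anchor (real n) (q t)))" for t
    have v: "v t < m \<and> dist (x (v t)) (q t) \<le> 11/50" if "t \<le> L" for t
    proof -
      define y where "y = anchor (real n) (q t)"
      have qt: "norm (q t) \<le> real n" using qn[OF that] by simp
      note ap = anchor_props[OF n qt, folded y_def]
      have c: "1/2 < cnt m (H (1/5) y) x" using good ap by auto
      have "card {j. j < m \<and> x j \<in> H (1/5) y} \<noteq> 0"
      proof
        assume "card {j. j < m \<and> x j \<in> H (1/5) y} = 0"
        then show False using c by (simp only: cnt_card)
      qed
      then have "{j. j < m \<and> x j \<in> H (1/5) y} \<noteq> {}" by (metis card.empty)
      then have "\<exists>w. w < m \<and> x w \<in> H (1/5) y" by blast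
      then have vv: "v t < m \<and> x (v t) \<in> H (1/5) y" unfolding v_def y_def by (rule someI_ex)
      then have "dist (x (v t)) y < 1/5" using H_sub_ball by (force simp: dist_commute)
      then have "dist (x (v t)) (q t) \<le> 11/50" using ap(1) dist_triangle[of "x (v t)" "q t" y] by (simp add: dist_commute)
      then show ?thesis using vv by simp
    qed
    define p where "p t = (if t = 0 then i else if t = L then j else v t)" for t
    have q0: "q 0 = x i" and qL: "q L = x j" using L0 by (auto simp: q_def)
    have pp: "p t < m \<and> dist (x (p t)) (q t) \<le> 11/50" if "t \<le> L" for t
      using v[OF that] i j q0 qL by (auto simp: p_def)
    have qstep: "dist (q t) (q (Suc t)) \<le> 1/2" for t
    proof -
      have eq: "q (Suc t) - q t = (1 / real L) *\<^sub>R (x j - x i)"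
        by (simp add: q_def algebra_simps add_divide_distrib scaleR_add_left)
      have "dist (q t) (q (Suc t)) = norm (q (Suc t) - q t)"
        by (simp add: dist_norm norm_minus_commute)
      also have "\<dots> = norm (x j - x i) / real L" unfolding eq by simp
      also have "norm (x j - x i) \<le> norm (x j) + norm (x i)" by (rule norm_triangle_ineq4)
      also have "\<dots> \<le> 2 * real n"
      proof -
        have "norm (x j) < real n" "norm (x i) < real n" using inD i j by auto
        then show ?thesis by linarith
      qed
      finally show ?thesis using L0 n by (simp add: divide_right_mono field_simps)
    qed
    show "geo_walk_le x m (6*n) i j"
      unfolding geo_walk_le_def
    proof (intro exI conjI allI impI)
      show "L \<le> 6 * n" by (simp add: L_def)
      show "p 0 = i" by (simp add: p_def)
      show "p L = j" using L0 by (simp add: p_def)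
      show "p t < m" if "t \<le> L" for t using pp[OF that] by simp
      show "dist (x (p t)) (x (p (Suc t))) \<le> 1" if "t < L" for t
      proof -
        have a: "dist (x (p t)) (q t) \<le> 11/50" using pp[of t] that by simp
        have b: "dist (x (p (Suc t))) (q (Suc t)) \<le> 11/50" using pp[of "Suc t"] that by simp
        have t1: "dist (x (p t)) (x (p (Suc t))) \<le> dist (x (p t)) (q t) + dist (q t) (x (p (Suc t)))"
          by (rule dist_triangle)
        have t2: "dist (q t) (x (p (Suc t))) \<le> dist (q t) (q (Suc t)) + dist (q (Suc t)) (x (p (Suc t)))"
          by (rule dist_triangle)
        have t3: "dist (q (Suc t)) (x (p (Suc t))) = dist (x (p (Suc t))) (q (Suc t))"
          by (rule dist_commute)
        show ?thesis using a b qstep[of t] t1 t2 t3 by linarith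
      qed
    qed
  qed
qed

lemma card_sum_if: fixes m :: nat shows "real (card {j. j < m \<and> P j}) = (\<Sum>j<m. if P j then 1 else 0)"
proof -
  have "(\<Sum>j<m. if P j then 1 else (0::real)) = (\<Sum>j\<in>{x\<in>{..<m}. P x}. 1)"
    by (rule sum.inter_filter[symmetric]) simp
  moreover have "{x\<in>{..<m}. P x} = {j. j < m \<and> P j}" by auto
  ultimately show ?thesis by simp
qed

lemma walk_finite:
  "geo_walk_le x m k i j \<longleftrightarrow>
   (\<exists>l\<in>{..k}. \<exists>p\<in>PiE {..l} (\<lambda>_. {..<m}). p 0 = i \<and> p l = j \<and>
       (\<forall>t\<in>{..<l}. dist (x (p t)) (x (p (Suc t))) \<le> 1))"
proof
  assume "geo_walk_le x m k i j"
  then obtain p l where pl: "l \<le> k" "p 0 = i" "p l = j" "\<forall>t\<le>l. p t < m"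
      "\<forall>t<l. dist (x (p t)) (x (p (Suc t))) \<le> 1"
    unfolding geo_walk_le_def by blast
  show "\<exists>l\<in>{..k}. \<exists>p\<in>PiE {..l} (\<lambda>_. {..<m}). p 0 = i \<and> p l = j \<and>
       (\<forall>t\<in>{..<l}. dist (x (p t)) (x (p (Suc t))) \<le> 1)"
    using pl by (intro bexI[of _ l] bexI[of _ "restrict p {..l}"]) auto
next
  assume "\<exists>l\<in>{..k}. \<exists>p\<in>PiE {..l} (\<lambda>_. {..<m}). p 0 = i \<and> p l = j \<and>
       (\<forall>t\<in>{..<l}. dist (x (p t)) (x (p (Suc t))) \<le> 1)"
  then obtain l p where "l \<le> k" "p \<in> PiE {..l} (\<lambda>_. {..<m})" "p 0 = i" "p l = j"
      "\<forall>t\<in>{..<l}. dist (x (p t)) (x (p (Suc t))) \<le> 1" by auto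
  then show "geo_walk_le x m k i j" unfolding geo_walk_le_def
    by (intro exI[of _ p] exI[of _ l]) auto
qed

lemma comp_meas:
  assumes "sets M = sets (borel :: (real^2) measure)"
  shows "(\<lambda>x. x a) \<in> measurable (PiM I (\<lambda>_. M)) (borel :: (real^2) measure)"
proof (cases "a \<in> I")
  case True
  have "(\<lambda>x. x a) \<in> measurable (PiM I (\<lambda>_. M)) M"
    using measurable_component_singleton[OF True, of "\<lambda>_. M"] by simp
  then show ?thesis using measurable_cong_sets[of "PiM I (\<lambda>_. M)" "PiM I (\<lambda>_. M)" M borel] assms by simp
next
  case False
  have "(\<lambda>x. x a) \<in> measurable (PiM I (\<lambda>_. M)) (borel :: (real^2) measure) \<longleftrightarrow>
        (\<lambda>x. undefined) \<in> measurable (PiM I (\<lambda>_. M)) (borel :: (real^2) measure)"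
    by (rule measurable_cong) (use False in \<open>auto simp: space_PiM PiE_def extensional_def\<close>)
  then show ?thesis by simp
qed

lemma target_meas:
  fixes M :: "(real^2) measure"
  assumes sM: "sets M = sets (borel :: (real^2) measure)"
  shows "{x \<in> space (PiM {..<m} (\<lambda>_. M)). (\<forall>i<m. a \<le> real (geo_degree x m i) \<and> real (geo_degree x m i) \<le> b)
          \<and> geo_diam_le x m k} \<in> sets (PiM {..<m} (\<lambda>_. M))"
proof -
  let ?P = "PiM {..<m} (\<lambda>_. M)"
  have cm[measurable]: "(\<lambda>x. x c) \<in> measurable ?P borel" for c using comp_meas[OF sM] .
  have dm: "{x \<in> space ?P. dist (x c) (x d) \<le> 1} \<in> sets ?P" for c d by measurable
  define S where "S i (x::nat \<Rightarrow> real^2) = (\<Sum>j<m. if j \<noteq> i \<and> dist (x i) (x j) \<le> 1 then 1 else (0::real))" for i x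
  have Sm[measurable]: "S i \<in> borel_measurable ?P" for i unfolding S_def by measurable
  have Am: "{x \<in> space ?P. a \<le> S i x \<and> S i x \<le> b} \<in> sets ?P" for i by measurable
  define W where "W i j (x::nat \<Rightarrow> real^2) = (\<exists>l\<in>{..k}. \<exists>p\<in>PiE {..l} (\<lambda>_. {..<m}). p 0 = i \<and> p l = j \<and>
       (\<forall>t\<in>{..<l}. dist (x (p t)) (x (p (Suc t))) \<le> 1))" for i j x
  have Wm: "{x \<in> space ?P. W i j x} \<in> sets ?P" for i j
    unfolding W_def
  proof (intro sets.sets_Collect_finite_Ex finite_PiE finite_atMost finite_lessThan)
    fix l p
    show "{x \<in> space ?P. p 0 = i \<and> p l = j \<and> (\<forall>t\<in>{..<l}. dist (x (p t)) (x (p (Suc t))) \<le> 1)} \<in> sets ?P"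
      by (intro sets.sets_Collect_conj sets.sets_Collect_const sets.sets_Collect_finite_All dm finite_lessThan)
  qed
  have eq: "{x \<in> space ?P. (\<forall>i<m. a \<le> real (geo_degree x m i) \<and> real (geo_degree x m i) \<le> b)
          \<and> geo_diam_le x m k} =
     {x \<in> space ?P. (\<forall>i\<in>{..<m}. \<forall>j\<in>{..<m}. W i j x) \<and> (\<forall>i\<in>{..<m}. a \<le> S i x \<and> S i x \<le> b)}"
  proof -
    have "real (geo_degree x m i) = S i x" for x i
      unfolding geo_degree_def S_def by (rule card_sum_if)
    moreover have "geo_diam_le x m k = (\<forall>i\<in>{..<m}. \<forall>j\<in>{..<m}. W i j x)" for x
      unfolding geo_diam_le_def W_def walk_finite by auto
    ultimately show ?thesis by auto
  qed
  show ?thesis unfolding eq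
    by (intro sets.sets_Collect_conj sets.sets_Collect_finite_All Am Wm finite_lessThan)
qed

lemma exp_half_lb: "exp (- (1/2::real)) \<le> 8/13"
proof -
  have "1 + 1/2 + (1/2)^2/2 \<le> exp (1/2::real)" by (rule exp_lower_Taylor_quadratic) simp
  then have "13/8 \<le> exp (1/2::real)" by (simp add: power2_eq_square)
  then show ?thesis by (simp add: exp_minus field_simps)
qed

lemma exp_half_ub: "exp (1/2::real) \<le> 7/4"
proof -
  have "exp (1/2::real) ^ 2 = exp 1" by (simp add: exp_of_nat_mult[symmetric])
  also have "\<dots> \<le> (7/4) ^ 2" by (rule order_trans[OF exp_le]) (simp add: power2_eq_square)
  finally show ?thesis by (rule power2_le_imp_le) simp
qed

lemma pi_ge3: "3 \<le> pi"
  using pi_approx by simp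

lemma prob_bound:
  fixes n m :: nat and lam :: real
  assumes n: "n \<ge> 100" and lam: "lam = real m / (pi * real n ^ 2)" and hyp: "200 * ln (real n) < lam"
  shows "1 - (2 + 6 * 2003^2) / real n \<le> measure (point_process m (real n))
           {x \<in> space (point_process m (real n)).
              (\<forall>i<m. pi / 3 * lam \<le> real (geo_degree x m i) \<and> real (geo_degree x m i) \<le> 2 * pi * lam)
              \<and> geo_diam_le x m (6 * n)}"
    and "measure (point_process m (real n))
           {x \<in> space (point_process m (real n)).
              (\<forall>i<m. pi / 3 * lam \<le> real (geo_degree x m i) \<and> real (geo_degree x m i) \<le> 2 * pi * lam)
              \<and> geo_diam_le x m (6 * n)} \<le> 1"
proof -
  define R where "R = real n"
  have R: "R \<ge> 100" using n by (simp add: R_def)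
  define D where "D = ball (0::real^2) R"
  define \<mu> where "\<mu> = uniform_measure lborel D"
  define P where "P = PiM {..<m} (\<lambda>_. \<mu>)"
  have PP: "point_process m (real n) = P" by (simp add: point_process_def P_def \<mu>_def R_def D_def)
  have mD: "measure lborel D = R^2 * pi" using circle_area[of R 0] R by (simp add: D_def)
  have eD: "emeasure lborel D = ennreal (R^2*pi)"
    using emeasure_eq_ennreal_measure[of lborel D] emeasure_lborel_ball_finite[of 0 R] mD
    by (simp add: D_def less_top)
  have mu_prob: "prob_space \<mu>" unfolding \<mu>_def by (rule prob_space_uniform_measure) (use eD R in auto)
  have sets_mu: "sets \<mu> = sets borel" by (simp add: \<mu>_def)
  interpret P: prob_space P unfolding P_def by (rule prob_space_PiM) (use mu_prob in auto)
  have meas_mu: "measure \<mu> A = measure lborel (D \<inter> A) / (R^2*pi)" if "A \<in> sets borel" for A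
    unfolding \<mu>_def using that eD R mD by (subst measure_uniform_measure) auto
  have Rpos: "R^2 * pi > 0" using R by simp
  have lamR: "lam = real m / (R^2*pi)" by (simp add: lam R_def mult.commute)
  have lam0: "lam \<ge> 0" by (simp add: lam)
  have pm_in: "m * measure \<mu> A = lam * measure lborel A" if "A \<in> sets borel" "A \<subseteq> D" for A
  proof -
    have "D \<inter> A = A" using that by auto
    then show ?thesis using meas_mu[OF that(1)] by (simp add: lamR)
  qed
  have pm_ball: "m * measure \<mu> (ball y r) \<le> lam * (r^2*pi)" if "r \<ge> 0" for y r
  proof -
    have "measure lborel (D \<inter> ball y r) \<le> measure lborel (ball y r)"
    proof (rule measure_mono_fmeasurable)
      show "ball y r \<in> fmeasurable lborel" by (intro fmeasurableI emeasure_lborel_ball_finite) simp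
    qed (auto simp: D_def)
    also have "\<dots> = r^2 * pi" using circle_area[OF that] .
    finally have "m * (measure lborel (D \<inter> ball y r) / (R^2*pi)) \<le> m * (r^2 * pi / (R^2*pi))"
      using Rpos by (intro mult_left_mono divide_right_mono) auto
    then show ?thesis using meas_mu[of "ball y r"] by (simp add: lamR)
  qed
  have e_lam: "exp (- lam / 50) \<le> 1 / real n ^ 4"
  proof -
    have "exp (4 * ln (real n)) = real n ^ 4" using exp_of_nat_mult[of 4 "ln (real n)"] n by simp
    moreover have "- lam / 50 \<le> - (4 * ln (real n))" using hyp by simp
    ultimately have "exp (- lam / 50) \<le> exp (- (4 * ln (real n)))" by simp
    also have "\<dots> = 1 / real n ^ 4" using \<open>exp (4 * ln (real n)) = real n ^ 4\<close> by (simp add: exp_minus divide_inverse)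
    finally show ?thesis .
  qed
  have cntm[measurable]: "cnt m A \<in> borel_measurable P" if "A \<in> sets borel" for A
    unfolding P_def by (rule cnt_meas) (use that sets_mu in simp)
  have Hm[measurable]: "cnt m (H r y) \<in> borel_measurable P" for r y by (rule cntm) simp
  have Bm[measurable]: "cnt m (ball y r) \<in> borel_measurable P" for r y by (rule cntm) simp
  have Dm[measurable]: "cnt m (UNIV - D) \<in> borel_measurable P" by (rule cntm) (simp add: D_def)
  define B0 where "B0 = {x\<in>space P. 1/2 \<le> cnt m (UNIV - D) x}"
  define B1 where "B1 y = {x\<in>space P. cnt m (H (49/50) y) x \<le> pi/3*lam + 1}" for y
  define B2 where "B2 y = {x\<in>space P. 2*pi*lam \<le> cnt m (ball y (103/100)) x}" for y
  define B3 where "B3 y = {x\<in>space P. cnt m (H (1/5) y) x \<le> 1/2}" for y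
  define G where "G = {y \<in> grid n. norm y^2 + 1 < R^2}"
  define Bad where "Bad = B0 \<union> (\<Union>y\<in>G. B1 y \<union> B2 y \<union> B3 y)"
  have B0m: "B0 \<in> P.events" unfolding B0_def by measurable
  have B1m: "B1 y \<in> P.events" for y unfolding B1_def by measurable
  have B2m: "B2 y \<in> P.events" for y unfolding B2_def by measurable
  have B3m: "B3 y \<in> P.events" for y unfolding B3_def by measurable
  have finG: "finite G" unfolding G_def using finite_grid by auto
  have Badm: "Bad \<in> P.events" unfolding Bad_def
    by (intro sets.Un sets.finite_UN finG B0m B1m B2m B3m)
  have eh1: "exp (- (1/2::real)) \<le> 8/13" by (rule exp_half_lb)
  have eh2: "exp (1/2::real) \<le> 7/4" by (rule exp_half_ub)
  have eh3: "1 \<le> exp (1/2::real)" by simp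
  have pi3: "3 \<le> pi" by (rule pi_ge3)
  have lp: "lam * 3 \<le> lam * pi" by (rule mult_left_mono[OF pi3 lam0])
  have el: "exp (1/2 - lam/50) \<le> 2 * exp (- lam / 50)"
  proof -
    have "exp (1/2 - lam/50) = exp (1/2) * exp (- lam / 50)" by (simp add: exp_add[symmetric])
    also have "\<dots> \<le> 2 * exp (- lam / 50)" using eh2 by (intro mult_right_mono) auto
    finally show ?thesis .
  qed
  have p0: "P.prob B0 \<le> exp (- R / 2)"
  proof -
    have "P.prob B0 \<le> exp (- R * (1/2) + m * measure \<mu> (UNIV - D) * (exp R - 1))"
      unfolding B0_def P_def using tail_upper[OF mu_prob, of "UNIV - D" R m "1/2"] R sets_mu
      by (simp add: D_def)
    also have "measure \<mu> (UNIV - D) = 0" using meas_mu[of "UNIV - D"] by (simp add: D_def)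
    finally show ?thesis by simp
  qed
  have pB: "P.prob (B1 y) + P.prob (B2 y) + P.prob (B3 y) \<le> 6 * exp (- lam / 50)" if y: "y \<in> G" for y
  proof -
    have yG: "norm y ^ 2 + 1 < R ^ 2" using y by (simp add: G_def)
    have HD: "H r y \<subseteq> D" if "0 \<le> r" "r \<le> 1" for r
    proof -
      have "r ^ 2 \<le> 1" using that by (simp add: power_le_one)
      then show ?thesis unfolding D_def by (intro H_sub_D) (use yG R in auto)
    qed
    have Hs: "H r y \<in> sets \<mu>" for r using sets_mu by simp
    have mH1: "m * measure \<mu> (H (49/50) y) \<ge> lam * (pi * (49/50)^2/2)"
    proof -
      have "m * measure \<mu> (H (49/50) y) = lam * measure lborel (H (49/50) y)"
        by (rule pm_in) (use HD[of "49/50"] in auto)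
      moreover have "lam * (pi * (49/50)^2/2) \<le> lam * measure lborel (H (49/50) y)"
        by (rule mult_left_mono[OF H_measure lam0]) simp
      ultimately show ?thesis by simp
    qed
    have "P.prob (B1 y) \<le> exp (1/2 * (pi/3*lam + 1) - m * measure \<mu> (H (49/50) y) * (1 - exp (- (1/2))))"
      unfolding B1_def P_def by (rule tail_lower[OF mu_prob Hs]) simp
    also have "\<dots> \<le> exp (1/2 - lam/50)"
    proof -
      define X where "X = m * measure \<mu> (H (49/50) y) * (1 - exp (- (1/2)))"
      have "X \<ge> lam * (pi * (49/50)^2/2) * (5/13)"
        unfolding X_def by (rule mult_mono[OF mH1]) (use eh1 lam0 in auto)
      moreover have "lam * (pi * (49/50)^2/2) * (5/13) = (lam * pi) * (2401/13000)"
        by (simp add: power2_eq_square)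
      moreover have "1/2 * (pi/3*lam + 1) = (lam * pi) / 6 + 1/2" by (simp add: algebra_simps)
      ultimately have "1/2 * (pi/3*lam + 1) - X \<le> 1/2 - lam/50" using lp lam0 by linarith
      then show ?thesis unfolding X_def by (simp only: exp_le_cancel_iff)
    qed
    also have "\<dots> \<le> 2 * exp (- lam / 50)" by (rule el)
    finally have b1: "P.prob (B1 y) \<le> 2 * exp (- lam / 50)" .
    have mH3: "m * measure \<mu> (H (1/5) y) \<ge> lam * (pi * (1/5)^2/2)"
    proof -
      have "m * measure \<mu> (H (1/5) y) = lam * measure lborel (H (1/5) y)"
        by (rule pm_in) (use HD[of "1/5"] in auto)
      moreover have "lam * (pi * (1/5)^2/2) \<le> lam * measure lborel (H (1/5) y)"
        by (rule mult_left_mono[OF H_measure lam0]) simp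
      ultimately show ?thesis by simp
    qed
    have "P.prob (B3 y) \<le> exp (1/2 * (1/2) - m * measure \<mu> (H (1/5) y) * (1 - exp (- (1/2))))"
      unfolding B3_def P_def by (rule tail_lower[OF mu_prob Hs]) simp
    also have "\<dots> \<le> exp (1/2 - lam/50)"
    proof -
      define X where "X = m * measure \<mu> (H (1/5) y) * (1 - exp (- (1/2)))"
      have "X \<ge> lam * (pi * (1/5)^2/2) * (5/13)"
        unfolding X_def by (rule mult_mono[OF mH3]) (use eh1 lam0 in auto)
      moreover have "lam * (pi * (1/5)^2/2) * (5/13) = (lam * pi) * (1/130)"
        by (simp add: power2_eq_square)
      ultimately have "1/2 * (1/2) - X \<le> 1/2 - lam/50" using lp lam0 by linarith
      then show ?thesis unfolding X_def by (simp only: exp_le_cancel_iff)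
    qed
    also have "\<dots> \<le> 2 * exp (- lam / 50)" by (rule el)
    finally have b3: "P.prob (B3 y) \<le> 2 * exp (- lam / 50)" .
    have bs: "ball y (103/100) \<in> sets \<mu>" using sets_mu by simp
    have "P.prob (B2 y) \<le> exp (- (1/2) * (2*pi*lam) + m * measure \<mu> (ball y (103/100)) * (exp (1/2) - 1))"
      unfolding B2_def P_def by (rule tail_upper[OF mu_prob bs]) simp
    also have "\<dots> \<le> exp (- lam / 50)"
    proof -
      define X where "X = m * measure \<mu> (ball y (103/100)) * (exp (1/2) - 1)"
      have "X \<le> lam * ((103/100)^2*pi) * (3/4)"
        unfolding X_def by (rule mult_mono[OF pm_ball[of "103/100" y]]) (use eh2 eh3 lam0 in auto)
      moreover have "lam * ((103/100)^2*pi) * (3/4) = (lam * pi) * (31827/40000)"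
        by (simp add: power2_eq_square)
      moreover have "- (1/2) * (2*pi*lam) = - (lam * pi)" by (simp add: algebra_simps)
      ultimately have "- (1/2) * (2*pi*lam) + X \<le> - lam / 50" using lp lam0 by linarith
      then show ?thesis unfolding X_def by (simp only: exp_le_cancel_iff)
    qed
    also have "\<dots> \<le> 2 * exp (- lam / 50)" by simp
    finally have b2: "P.prob (B2 y) \<le> 2 * exp (- lam / 50)" .
    show ?thesis using b1 b2 b3 by simp
  qed
  have "P.prob Bad \<le> P.prob B0 + P.prob (\<Union>y\<in>G. B1 y \<union> B2 y \<union> B3 y)"
    unfolding Bad_def by (rule measure_Un_le) (use B0m B1m B2m B3m finG in auto)
  also have "P.prob (\<Union>y\<in>G. B1 y \<union> B2 y \<union> B3 y) \<le> (\<Sum>y\<in>G. P.prob (B1 y \<union> B2 y \<union> B3 y))"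
    by (rule P.finite_measure_subadditive_finite) (use finG B1m B2m B3m in auto)
  also have "\<dots> \<le> (\<Sum>y\<in>G. 6 * exp (- lam / 50))"
  proof (rule sum_mono)
    fix y assume "y \<in> G"
    have "P.prob (B1 y \<union> B2 y \<union> B3 y) \<le> P.prob (B1 y \<union> B2 y) + P.prob (B3 y)"
      by (rule measure_Un_le) (use B1m B2m B3m in auto)
    also have "\<dots> \<le> P.prob (B1 y) + P.prob (B2 y) + P.prob (B3 y)"
      using measure_Un_le[OF B1m B2m] by simp
    also have "\<dots> \<le> 6 * exp (- lam / 50)" using pB[OF \<open>y \<in> G\<close>] .
    finally show "P.prob (B1 y \<union> B2 y \<union> B3 y) \<le> 6 * exp (- lam / 50)" .
  qed
  also have "\<dots> = card G * (6 * exp (- lam / 50))" by simp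
  finally have bad1: "P.prob Bad \<le> exp (- R / 2) + card G * (6 * exp (- lam / 50))"
    using p0 by linarith
  have cG: "real (card G) \<le> (2003 * real n)^2"
  proof -
    have "card G \<le> card (grid n)" unfolding G_def by (intro card_mono finite_grid) auto
    also have "\<dots> \<le> (2000*n+3)^2" by (rule card_grid)
    also have "\<dots> \<le> (2003*n)^2" using n by (intro power_mono) auto
    finally have "real (card G) \<le> real ((2003*n)^2)" by (simp only: of_nat_le_iff)
    then show ?thesis by simp
  qed
  have "card G * (6 * exp (- lam / 50)) \<le> (2003 * real n)^2 * (6 * (1 / real n ^ 4))"
    using cG e_lam by (intro mult_mono) auto
  also have "\<dots> = 6 * 2003^2 / real n ^ 2" using n by (simp add: power2_eq_square field_simps eval_nat_numeral)
  also have "\<dots> \<le> 6 * 2003^2 / real n" using n by (intro divide_left_mono) (auto simp: power2_eq_square)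
  finally have t2: "card G * (6 * exp (- lam / 50)) \<le> 6 * 2003^2 / real n" .
  have t1: "exp (- R / 2) \<le> 2 / real n"
  proof -
    have "1 + R/2 \<le> exp (R/2)" by (rule exp_ge_add_one_self)
    then have e: "R/2 \<le> exp (R/2)" by linarith
    have "exp (- R / 2) * exp (R / 2) = 1" by (simp add: exp_add[symmetric])
    then have x: "exp (- R / 2) = 1 / exp (R/2)" by (simp add: field_simps)
    have "1 / exp (R/2) \<le> 1 / (R/2)" by (rule divide_left_mono[OF e]) (use R in auto)
    moreover note x
    moreover have "1 / (R/2) = 2 / real n" by (simp add: R_def)
    ultimately show ?thesis by simp
  qed
  have badb: "P.prob Bad \<le> (2 + 6 * 2003^2) / real n"
    using bad1 t1 t2 by (simp add: add_divide_distrib)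
  define T where "T = {x \<in> space P.
              (\<forall>i<m. pi / 3 * lam \<le> real (geo_degree x m i) \<and> real (geo_degree x m i) \<le> 2 * pi * lam)
              \<and> geo_diam_le x m (6 * n)}"
  have Tm: "T \<in> P.events" unfolding T_def P_def by (rule target_meas) (rule sets_mu)
  have sub: "space P - Bad \<subseteq> T"
  proof
    fix x assume x: "x \<in> space P - Bad"
    have inD: "\<forall>j<m. x j \<in> ball 0 (real n)"
    proof (intro allI impI)
      fix j assume j: "j < m"
      have "cnt m (UNIV - D) x < 1/2" using x by (auto simp: Bad_def B0_def)
      then have c0: "card {j. j < m \<and> x j \<in> UNIV - D} = 0" by (simp only: cnt_card)
      have "{j. j < m \<and> x j \<in> UNIV - D} = {}" using c0 by (simp add: card_eq_0_iff)
      then show "x j \<in> ball 0 (real n)" using j by (auto simp: D_def R_def)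
    qed
    have good: "\<forall>y\<in>grid n. norm y ^ 2 + 1 < real n ^ 2 \<longrightarrow>
      pi/3*lam + 1 < cnt m (H (49/50) y) x \<and> cnt m (ball y (103/100)) x < 2*pi*lam \<and> 1/2 < cnt m (H (1/5) y) x"
      using x by (auto simp: Bad_def B1_def B2_def B3_def G_def R_def not_le)
    show "x \<in> T" using deterministic[OF n inD good] x by (simp add: T_def)
  qed
  have "P.prob (space P - Bad) \<le> P.prob T" by (rule P.finite_measure_mono[OF sub Tm])
  moreover have "P.prob (space P - Bad) = 1 - P.prob Bad" by (rule P.prob_compl[OF Badm])
  ultimately show "1 - (2 + 6 * 2003^2) / real n \<le> measure (point_process m (real n))
           {x \<in> space (point_process m (real n)).
              (\<forall>i<m. pi / 3 * lam \<le> real (geo_degree x m i) \<and> real (geo_degree x m i) \<le> 2 * pi * lam)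
              \<and> geo_diam_le x m (6 * n)}"
    using badb unfolding PP T_def by linarith
  show "measure (point_process m (real n))
           {x \<in> space (point_process m (real n)).
              (\<forall>i<m. pi / 3 * lam \<le> real (geo_degree x m i) \<and> real (geo_degree x m i) \<le> 2 * pi * lam)
              \<and> geo_diam_le x m (6 * n)} \<le> 1"
    unfolding PP by (rule P.prob_le_1)
qed


theorem lemma2p1:
  "\<exists>C1::real. C1 > 0 \<and>
     (\<forall>f::nat \<Rightarrow> nat. mono f \<longrightarrow>
        (\<forall>n\<ge>1. real (f n) / (pi * real n ^ 2) > C1 * ln (real n)) \<longrightarrow>
        (\<lambda>n. measure (point_process (f n) (real n))
               {x \<in> space (point_process (f n) (real n)).
                  (\<forall>i<f n. pi / 3 * (real (f n) / (pi * real n ^ 2)) \<le> real (geo_degree x (f n) i)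
                         \<and> real (geo_degree x (f n) i) \<le> 2 * pi * (real (f n) / (pi * real n ^ 2)))
                  \<and> geo_diam_le x (f n) (6 * n)})
        \<longlonglongrightarrow> 1)"
proof (intro exI[of _ "200::real"] conjI allI impI)
  show "(0::real) < 200" by simp
  fix f :: "nat \<Rightarrow> nat"
  assume hyp: "\<forall>n\<ge>1. real (f n) / (pi * real n ^ 2) > 200 * ln (real n)"
  let ?K = "(2 + 6 * 2003^2) :: real"
  show "(\<lambda>n. measure (point_process (f n) (real n))
               {x \<in> space (point_process (f n) (real n)).
                  (\<forall>i<f n. pi / 3 * (real (f n) / (pi * real n ^ 2)) \<le> real (geo_degree x (f n) i)
                         \<and> real (geo_degree x (f n) i) \<le> 2 * pi * (real (f n) / (pi * real n ^ 2)))
                  \<and> geo_diam_le x (f n) (6 * n)})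
        \<longlonglongrightarrow> 1"
  proof (rule tendsto_sandwich[of "\<lambda>n. 1 - ?K / real n" _ sequentially "\<lambda>_. 1"])
    show "eventually (\<lambda>n. 1 - ?K / real n \<le> measure (point_process (f n) (real n))
               {x \<in> space (point_process (f n) (real n)).
                  (\<forall>i<f n. pi / 3 * (real (f n) / (pi * real n ^ 2)) \<le> real (geo_degree x (f n) i)
                         \<and> real (geo_degree x (f n) i) \<le> 2 * pi * (real (f n) / (pi * real n ^ 2)))
                  \<and> geo_diam_le x (f n) (6 * n)}) sequentially"
    proof (rule eventually_sequentiallyI[of 100])
      fix n :: nat assume n: "100 \<le> n"
      show "1 - ?K / real n \<le> measure (point_process (f n) (real n))
               {x \<in> space (point_process (f n) (real n)).
                  (\<forall>i<f n. pi / 3 * (real (f n) / (pi * real n ^ 2)) \<le> real (geo_degree x (f n) i)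
                         \<and> real (geo_degree x (f n) i) \<le> 2 * pi * (real (f n) / (pi * real n ^ 2)))
                  \<and> geo_diam_le x (f n) (6 * n)}"
        by (rule prob_bound(1)[OF n refl]) (use hyp n in auto)
    qed
    show "eventually (\<lambda>n. measure (point_process (f n) (real n))
               {x \<in> space (point_process (f n) (real n)).
                  (\<forall>i<f n. pi / 3 * (real (f n) / (pi * real n ^ 2)) \<le> real (geo_degree x (f n) i)
                         \<and> real (geo_degree x (f n) i) \<le> 2 * pi * (real (f n) / (pi * real n ^ 2)))
                  \<and> geo_diam_le x (f n) (6 * n)} \<le> 1) sequentially"
    proof (rule eventually_sequentiallyI[of 100])
      fix n :: nat assume n: "100 \<le> n"
      show "measure (point_process (f n) (real n))
               {x \<in> space (point_process (f n) (real n)).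
                  (\<forall>i<f n. pi / 3 * (real (f n) / (pi * real n ^ 2)) \<le> real (geo_degree x (f n) i)
                         \<and> real (geo_degree x (f n) i) \<le> 2 * pi * (real (f n) / (pi * real n ^ 2)))
                  \<and> geo_diam_le x (f n) (6 * n)} \<le> 1"
        by (rule prob_bound(2)[OF n refl]) (use hyp n in auto)
    qed
    show "(\<lambda>n. 1 - ?K / real n) \<longlonglongrightarrow> 1"
      using tendsto_diff[OF tendsto_const[of "1::real"] lim_const_over_n[of ?K]] by simp
    show "(\<lambda>_. 1::real) \<longlonglongrightarrow> 1" by simp
  qed
qed

end
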